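(* Let $(S,g_1^0,g_2^0,g_3^0,D_1,D_2,D_3,\xi)\in\mathrm{MC}_{\mathrm{pre}}$ satisfy $g_1^0>0$, $g_2^0<0$, $g_3^0<0$ and $c_{23}^1\neq0$ everywhere on $S$. Then there exist unique $A,B\in C^\infty(S,\mathbb{R})$ with $A,B>0$ and a unique $\sigma\in\{-1,+1\}$ such that the transformed tuple $$\big(S,\,Ag_1^0,\,Ag_2^0,\,Ag_3^0,\,\sigma AB^{g_2^0+g_3^0}D_1,\,\sigma AB^{g_3^0+g_1^0}D_2,\,\sigma AB^{g_1^0+g_2^0}D_3,\,\xi+\log A+(g_1^0+g_2^0+g_3^0)\log B\big)$$ lies in $\mathrm{MC}_{\mathrm{normal}}$. (The resulting partial map $\mathcal{N}:\mathrm{MC}_{\mathrm{pre}}\nrightarrow\mathrm{MC}_{\mathrm{normal}}$ is called normalization.)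
   Context: "Cyclic $(i,j,k)$" means $(i,j,k)\in\{(1,2,3),(2,3,1),(3,1,2)\}$. Let $S$ be a smooth manifold diffeomorphic to $\mathbb{R}^3$ and $D_1,D_2,D_3$ a frame of vector fields on $S$; its structure functions $c_{jk}^i\in C^\infty(S,\mathbb{R})$ are defined by $[D_j,D_k]=\sum_{i=1}^3c_{jk}^iD_i$. $\mathrm{MC}_{\mathrm{pre}}$ is the set of tuples $(S,g_1^0,g_2^0,g_3^0,D_1,D_2,D_3,\xi)$ with $g_i^0,\xi\in C^\infty(S,\mathbb{R})$ satisfying (E1) $0=g_2^0g_3^0+g_3^0g_1^0+g_1^0g_2^0$, and (E2) $0=D_i(g_j^0+g_k^0)+c_{ij}^j(g_i^0-g_j^0)+c_{ik}^k(g_i^0-g_k^0)-2D_i(\xi)g_i^0$ for all cyclic $(i,j,k)$. $\mathrm{MC}_{\mathrm{normal}}\subset\mathrm{MC}_{\mathrm{pre}}$ consists of the tuples with $(g_1^0,g_2^0,g_3^0)=\tfrac12(1,-1-u,-1-\tfrac1u)$ for some $u\in C^\infty(S,\mathbb{R})$ with $u>0$, and with $c_{23}^1=-2$. Here $B^f$ means $e^{f\log B}$. *)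

theory Defs
  imports "HOL-Analysis.Analysis"
begin

text \<open>The manifold S (diffeomorphic to R^3) is modelled as R^3 itself, type real^3.
  Families indexed by i in {1,2,3} are functions on nat; only indices 1,2,3 matter.\<close>

type_synonym pt = "real^3"

primrec Ck :: "nat \<Rightarrow> (pt \<Rightarrow> real) \<Rightarrow> bool" where
  "Ck 0 f = continuous_on UNIV f"
| "Ck (Suc k) f = ((\<forall>x. f differentiable (at x)) \<and>
      (\<forall>i. Ck k (\<lambda>x. frechet_derivative f (at x) (axis i 1))))"

definition smooth :: "(pt \<Rightarrow> real) \<Rightarrow> bool" where
  "smooth f \<longleftrightarrow> (\<forall>k. Ck k f)"

definition smooth_vf :: "(pt \<Rightarrow> pt) \<Rightarrow> bool" where
  "smooth_vf V \<longleftrightarrow> (\<forall>i. smooth (\<lambda>x. V x $ i))"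

definition vf_apply :: "(pt \<Rightarrow> pt) \<Rightarrow> (pt \<Rightarrow> real) \<Rightarrow> pt \<Rightarrow> real" where
  "vf_apply V f x = frechet_derivative f (at x) (V x)"

definition lie_bracket :: "(pt \<Rightarrow> pt) \<Rightarrow> (pt \<Rightarrow> pt) \<Rightarrow> pt \<Rightarrow> pt" where
  "lie_bracket V W x = frechet_derivative W (at x) (V x) - frechet_derivative V (at x) (W x)"

definition is_frame :: "(nat \<Rightarrow> pt \<Rightarrow> pt) \<Rightarrow> bool" where
  "is_frame D \<longleftrightarrow> (\<forall>i\<in>{1,2,3}. smooth_vf (D i)) \<and>
     (\<forall>x a. (\<Sum>l\<in>{1,2,3}. a l *\<^sub>R D l x) = 0 \<longrightarrow> (\<forall>l\<in>{1,2,3}. a l = 0))"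

definition frame_coord :: "(nat \<Rightarrow> pt \<Rightarrow> pt) \<Rightarrow> pt \<Rightarrow> pt \<Rightarrow> nat \<Rightarrow> real" where
  "frame_coord D v x i = (THE c. \<exists>a. v = (\<Sum>l\<in>{1,2,3}. a l *\<^sub>R D l x) \<and> c = a i)"

text \<open>Structure functions: [D_j,D_k] = sum_i c_jk^i D_i.\<close>
definition struct_fun :: "(nat \<Rightarrow> pt \<Rightarrow> pt) \<Rightarrow> nat \<Rightarrow> nat \<Rightarrow> nat \<Rightarrow> pt \<Rightarrow> real" where
  "struct_fun D j k i x = frame_coord D (lie_bracket (D j) (D k) x) x i"

definition cyclic :: "nat \<Rightarrow> nat \<Rightarrow> nat \<Rightarrow> bool" where
  "cyclic i j k \<longleftrightarrow> (i, j, k) \<in> {(1,2,3), (2,3,1), (3,1,2)}"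

definition MC_pre :: "(nat \<Rightarrow> pt \<Rightarrow> real) \<Rightarrow> (nat \<Rightarrow> pt \<Rightarrow> pt) \<Rightarrow> (pt \<Rightarrow> real) \<Rightarrow> bool" where
  "MC_pre g D \<xi> \<longleftrightarrow>
     (\<forall>i\<in>{1,2,3}. smooth (g i)) \<and> smooth \<xi> \<and> is_frame D \<and>
     (\<forall>x. 0 = g 2 x * g 3 x + g 3 x * g 1 x + g 1 x * g 2 x) \<and>
     (\<forall>i j k x. cyclic i j k \<longrightarrow>
        0 = vf_apply (D i) (\<lambda>y. g j y + g k y) x
            + struct_fun D i j j x * (g i x - g j x)
            + struct_fun D i k k x * (g i x - g k x)
            - 2 * vf_apply (D i) \<xi> x * g i x)"

definition MC_normal :: "(nat \<Rightarrow> pt \<Rightarrow> real) \<Rightarrow> (nat \<Rightarrow> pt \<Rightarrow> pt) \<Rightarrow> (pt \<Rightarrow> real) \<Rightarrow> bool" where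
  "MC_normal g D \<xi> \<longleftrightarrow> MC_pre g D \<xi> \<and>
     (\<exists>u. smooth u \<and> (\<forall>x. u x > 0) \<and>
        (\<forall>x. g 1 x = 1/2 \<and> g 2 x = (-1 - u x) / 2 \<and> g 3 x = (-1 - 1 / u x) / 2)) \<and>
     (\<forall>x. struct_fun D 2 3 1 x = -2)"

end

theory Submission
  imports Defs
begin


abbreviation fd :: "(pt \<Rightarrow> real) \<Rightarrow> pt \<Rightarrow> pt \<Rightarrow> real" where
  "fd f x \<equiv> frechet_derivative f (at x)"

definition pd :: "3 \<Rightarrow> (pt \<Rightarrow> real) \<Rightarrow> pt \<Rightarrow> real" where
  "pd i f x = frechet_derivative f (at x) (axis i 1)"

lemma Ck_Suc_iff: "Ck (Suc k) f \<longleftrightarrow> (\<forall>x. f differentiable (at x)) \<and> (\<forall>i. Ck k (pd i f))"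
  by (simp add: pd_def[abs_def])

lemma Ck_cont: "Ck k f \<Longrightarrow> continuous_on UNIV f"
proof (cases k)
  case (Suc k')
  assume "Ck k f"
  then have "\<forall>x. f differentiable (at x)" using Suc by simp
  then show ?thesis
    by (intro continuous_at_imp_continuous_on ballI differentiable_imp_continuous_within) auto
qed auto

lemma Ck_Suc_imp: "Ck (Suc k) f \<Longrightarrow> Ck k f"
proof (induction k arbitrary: f)
  case 0 then show ?case using Ck_cont[OF 0] by simp
next
  case (Suc k) then show ?case by (simp add: Ck_Suc_iff del: Ck.simps)
qed

lemma smooth_diff: "smooth f \<Longrightarrow> f differentiable (at x)"
  unfolding smooth_def using Ck.simps(2) by blast

lemma smooth_pd: "smooth f \<Longrightarrow> smooth (pd i f)"
  unfolding smooth_def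
proof
  fix k assume "\<forall>k. Ck k f"
  then have "Ck (Suc k) f" by blast
  then show "Ck k (pd i f)" by (simp add: Ck_Suc_iff del: Ck.simps)
qed

lemma smooth_cont: "smooth f \<Longrightarrow> continuous_on UNIV f"
  unfolding smooth_def using Ck_cont by blast

lemma smooth_Ck: "smooth f \<Longrightarrow> Ck k f"
  unfolding smooth_def by blast

lemma fd_works: "f differentiable (at x) \<Longrightarrow> (f has_derivative fd f x) (at x)"
  by (simp add: frechet_derivative_works)

lemma fd_add: "f differentiable (at x) \<Longrightarrow> g differentiable (at x) \<Longrightarrow>
  fd (\<lambda>y. f y + g y) x v = fd f x v + fd g x v"
proof -
  assume a: "f differentiable (at x)" "g differentiable (at x)"
  have "((\<lambda>y. f y + g y) has_derivative (\<lambda>h. fd f x h + fd g x h)) (at x)"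
    by (rule has_derivative_add[OF fd_works[OF a(1)] fd_works[OF a(2)]])
  from fun_cong[OF frechet_derivative_at[OF this], of v] show ?thesis by simp
qed

lemma fd_mult: "f differentiable (at x) \<Longrightarrow> g differentiable (at x) \<Longrightarrow>
  fd (\<lambda>y. f y * g y) x v = f x * fd g x v + fd f x v * g x"
proof -
  assume a: "f differentiable (at x)" "g differentiable (at x)"
  have "((\<lambda>y. f y * g y) has_derivative (\<lambda>h. f x * fd g x h + fd f x h * g x)) (at x)"
    by (rule has_derivative_mult[OF fd_works[OF a(1)] fd_works[OF a(2)]])
  from fun_cong[OF frechet_derivative_at[OF this], of v] show ?thesis by simp
qed

lemma fd_inv: "f differentiable (at x) \<Longrightarrow> f x \<noteq> 0 \<Longrightarrow>
  fd (\<lambda>y. 1 / f y) x v = - (fd f x v / (f x * f x))"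
proof -
  assume a: "f differentiable (at x)" "f x \<noteq> 0"
  have "((\<lambda>y. 1 / f y) has_derivative (\<lambda>h. - (fd f x h / (f x * f x)))) (at x)"
    using has_derivative_divide[OF has_derivative_const fd_works[OF a(1)] a(2), of 1]
    by (simp add: field_simps)
  from fun_cong[OF frechet_derivative_at[OF this], of v] show ?thesis by simp
qed

lemma fd_exp: "f differentiable (at x) \<Longrightarrow>
  fd (\<lambda>y. exp (f y)) x v = exp (f x) * fd f x v"
proof -
  assume a: "f differentiable (at x)"
  have "((\<lambda>y. exp (f y)) has_derivative (\<lambda>h. exp (f x) * fd f x h)) (at x)"
    using has_derivative_exp[OF fd_works[OF a]] by (simp add: mult.commute)
  from fun_cong[OF frechet_derivative_at[OF this], of v] show ?thesis by simp
qed

lemma fd_ln: "f differentiable (at x) \<Longrightarrow> f x > 0 \<Longrightarrow>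
  fd (\<lambda>y. ln (f y)) x v = fd f x v * (1 / f x)"
proof -
  assume a: "f differentiable (at x)" "f x > 0"
  have "((\<lambda>y. ln (f y)) has_derivative (\<lambda>h. fd f x h * (1 / f x))) (at x)"
    using has_derivative_ln[OF a(2) fd_works[OF a(1)]] by (simp add: field_simps)
  from fun_cong[OF frechet_derivative_at[OF this], of v] show ?thesis by simp
qed

lemma diff_exp: fixes f :: "pt \<Rightarrow> real" assumes a: "f differentiable (at x)" shows "(\<lambda>y. exp (f y)) differentiable (at x)"
  by (rule differentiableI[OF has_derivative_exp[OF fd_works[OF a]]])
lemma diff_ln: fixes f :: "pt \<Rightarrow> real" assumes a: "f differentiable (at x)" "f x > 0" shows "(\<lambda>y. ln (f y)) differentiable (at x)"
  by (rule differentiableI[OF has_derivative_ln[OF a(2) fd_works[OF a(1)]]])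

lemma Ck_const: "Ck k (\<lambda>x. c)"
proof (induction k arbitrary: c)
  case (Suc k) then show ?case by (auto simp: Ck_Suc_iff pd_def[abs_def] simp del: Ck.simps)
qed auto

lemma Ck_add: "Ck k f \<Longrightarrow> Ck k g \<Longrightarrow> Ck k (\<lambda>x. f x + g x)"
proof (induction k arbitrary: f g)
  case 0 then show ?case by (auto intro: continuous_on_add)
next
  case (Suc k)
  have "pd i (\<lambda>x. f x + g x) = (\<lambda>x. pd i f x + pd i g x)" for i
    using Suc.prems by (auto simp: pd_def fd_add Ck_Suc_iff simp del: Ck.simps)
  then show ?case using Suc by (auto simp: Ck_Suc_iff simp del: Ck.simps)
qed

lemma Ck_mult: "Ck k f \<Longrightarrow> Ck k g \<Longrightarrow> Ck k (\<lambda>x. f x * g x)"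
proof (induction k arbitrary: f g)
  case 0 then show ?case by (auto intro: continuous_on_mult)
next
  case (Suc k)
  have "pd i (\<lambda>x. f x * g x) = (\<lambda>x. f x * pd i g x + pd i f x * g x)" for i
    using Suc.prems by (auto simp: pd_def fd_mult Ck_Suc_iff simp del: Ck.simps)
  moreover have "Ck k f" "Ck k g" using Suc.prems Ck_Suc_imp by auto
  ultimately show ?case using Suc by (auto simp: Ck_Suc_iff intro!: Ck_add simp del: Ck.simps)
qed

lemma Ck_inv: "Ck k f \<Longrightarrow> (\<forall>x. f x \<noteq> 0) \<Longrightarrow> Ck k (\<lambda>x. 1 / f x)"
proof (induction k arbitrary: f)
  case 0 then show ?case by (auto intro!: continuous_on_divide continuous_on_const)
next
  case (Suc k)
  have e: "pd i (\<lambda>x. 1 / f x) = (\<lambda>x. (-1) * (pd i f x * ((1 / f x) * (1 / f x))))" for i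
    using Suc.prems by (auto simp: pd_def fd_inv Ck_Suc_iff simp del: Ck.simps)
  have k: "Ck k f" using Suc.prems Ck_Suc_imp by auto
  have d: "(\<lambda>y. 1 / f y) differentiable (at x)" for x
    using Suc.prems by (auto simp: Ck_Suc_iff simp del: Ck.simps intro!: derivative_intros)
  have c: "Ck k (\<lambda>x. (-1) * (pd i f x * ((1 / f x) * (1 / f x))))" for i
    using Suc.prems k by (intro Ck_mult Ck_const Suc.IH) (auto simp: Ck_Suc_iff simp del: Ck.simps)
  show ?case unfolding Ck_Suc_iff e using c d by blast
qed

lemma Ck_exp: "Ck k f \<Longrightarrow> Ck k (\<lambda>x. exp (f x))"
proof (induction k arbitrary: f)
  case 0 then show ?case by (auto intro!: continuous_on_exp)
next
  case (Suc k)
  have "pd i (\<lambda>x. exp (f x)) = (\<lambda>x. exp (f x) * pd i f x)" for i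
    using Suc.prems by (auto simp: pd_def fd_exp Ck_Suc_iff simp del: Ck.simps)
  moreover have "Ck k f" using Suc.prems Ck_Suc_imp by auto
  moreover have "(\<lambda>y. exp (f y)) differentiable (at x)" for x
    using Suc.prems diff_exp by (auto simp: Ck_Suc_iff simp del: Ck.simps)
  ultimately show ?case using Suc by (auto simp: Ck_Suc_iff intro!: Ck_mult simp del: Ck.simps)
qed

lemma Ck_ln: assumes a: "Ck k f" "\<forall>x. f x > 0" shows "Ck k (\<lambda>x. ln (f x))"
proof (cases k)
  case 0
  have "continuous_on UNIV f" "\<forall>x. f x \<noteq> 0" using a 0 by (auto simp: less_le)
  then have "continuous_on UNIV (\<lambda>x. ln (f x))" by (intro continuous_on_ln) auto
  then show ?thesis using 0 by simp
next
  case (Suc k')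
  have nz: "\<forall>x. f x \<noteq> 0" using a by (auto simp: less_le)
  have e: "pd i (\<lambda>x. ln (f x)) = (\<lambda>x. pd i f x * (1 / f x))" for i
    using a Suc by (auto simp: pd_def fd_ln Ck_Suc_iff simp del: Ck.simps)
  have k: "Ck k' f" using a Suc Ck_Suc_imp by auto
  have d: "(\<lambda>y. ln (f y)) differentiable (at x)" for x
    using a Suc diff_ln by (auto simp: Ck_Suc_iff simp del: Ck.simps)
  have c: "Ck k' (\<lambda>x. pd i f x * (1 / f x))" for i
    using a Suc k nz by (intro Ck_mult Ck_inv) (auto simp: Ck_Suc_iff simp del: Ck.simps)
  show ?thesis unfolding Suc Ck_Suc_iff e using c d by blast
qed

lemma smooth_const[simp]: "smooth (\<lambda>x. c)" by (simp add: smooth_def Ck_const)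
lemma smooth_add: "smooth f \<Longrightarrow> smooth g \<Longrightarrow> smooth (\<lambda>x. f x + g x)"
  by (simp add: smooth_def Ck_add)
lemma smooth_mult: "smooth f \<Longrightarrow> smooth g \<Longrightarrow> smooth (\<lambda>x. f x * g x)"
  by (simp add: smooth_def Ck_mult)
lemma smooth_inv: "smooth f \<Longrightarrow> (\<forall>x. f x \<noteq> 0) \<Longrightarrow> smooth (\<lambda>x. 1 / f x)"
  by (simp add: smooth_def Ck_inv)
lemma smooth_exp: "smooth f \<Longrightarrow> smooth (\<lambda>x. exp (f x))"
  by (simp add: smooth_def Ck_exp)
lemma smooth_ln: "smooth f \<Longrightarrow> (\<forall>x. f x > 0) \<Longrightarrow> smooth (\<lambda>x. ln (f x))"
  by (simp add: smooth_def Ck_ln)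
lemma smooth_minus: "smooth f \<Longrightarrow> smooth (\<lambda>x. - f x)"
  using smooth_mult[OF smooth_const[of "-1"]] by simp
lemma smooth_diff': "smooth f \<Longrightarrow> smooth g \<Longrightarrow> smooth (\<lambda>x. f x - g x)"
  using smooth_add[OF _ smooth_minus] by simp
lemma smooth_div: "smooth f \<Longrightarrow> smooth g \<Longrightarrow> (\<forall>x. g x \<noteq> 0) \<Longrightarrow> smooth (\<lambda>x. f x / g x)"
  using smooth_mult[OF _ smooth_inv, of f g] by simp



lemma vf_diff: assumes "smooth_vf V" shows "V differentiable (at x)"
proof -
  have "(\<lambda>y. V y \<bullet> i) differentiable (at x)" if "i \<in> Basis" for i
  proof -
    from that obtain j where i: "i = axis j (1::real)" by (auto simp: Basis_vec_def)
    have "(\<lambda>y. V y \<bullet> i) = (\<lambda>y. V y $ j)" by (simp add: i inner_axis)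
    then show ?thesis using assms smooth_diff unfolding smooth_vf_def by metis
  qed
  then show ?thesis using differentiable_componentwise_within[of V x UNIV] by simp
qed

lemma fd_comp: assumes "V differentiable (at x)"
  shows "fd (\<lambda>y. V y $ m) x v = frechet_derivative V (at x) v $ m"
proof -
  have "((\<lambda>y. V y $ m) has_derivative (\<lambda>h. frechet_derivative V (at x) h $ m)) (at x)"
    by (rule bounded_linear.has_derivative[OF bounded_linear_vec_nth frechet_derivative_works[THEN iffD1, OF assms]])
  from fun_cong[OF frechet_derivative_at[OF this], of v] show ?thesis by simp
qed

lemma fd_expand: assumes "f differentiable (at x)"
  shows "fd f x v = (\<Sum>n\<in>UNIV. v $ n * pd n f x)"
proof -
  have l: "linear (fd f x)" by (rule linear_frechet_derivative[OF assms])
  have "fd f x v = fd f x (\<Sum>n\<in>UNIV. v $ n *\<^sub>R axis n 1)"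
    using basis_expansion[of v] by (simp add: scalar_mult_eq_scaleR)
  also have "\<dots> = (\<Sum>n\<in>UNIV. v $ n * pd n f x)"
    by (simp add: linear_sum[OF l] linear_scale[OF l] pd_def)
  finally show ?thesis .
qed

lemma smooth_sum3: "(\<And>n. smooth (\<lambda>x. F n x)) \<Longrightarrow> smooth (\<lambda>x. \<Sum>n\<in>(UNIV::3 set). F n x)"
  by (simp add: sum_3 smooth_add)

lemma lie_comp: assumes "smooth_vf V" "smooth_vf W"
  shows "lie_bracket V W x $ m = (\<Sum>n\<in>UNIV. V x $ n * pd n (\<lambda>y. W y $ m) x)
     - (\<Sum>n\<in>UNIV. W x $ n * pd n (\<lambda>y. V y $ m) x)"
  using assms by (simp add: lie_bracket_def fd_comp[symmetric] vf_diff fd_expand smooth_diff smooth_vf_def)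

lemma smooth_vf_lie: assumes "smooth_vf V" "smooth_vf W" shows "smooth_vf (lie_bracket V W)"
  unfolding smooth_vf_def lie_comp[OF assms]
  using assms unfolding smooth_vf_def
  by (intro allI smooth_diff' smooth_sum3 smooth_mult smooth_pd) auto

lemma smooth_inner: "smooth_vf U \<Longrightarrow> smooth_vf W \<Longrightarrow> smooth (\<lambda>x. U x \<bullet> W x)"
  unfolding inner_vec_def smooth_vf_def by (intro smooth_sum3) (auto intro: smooth_mult)

lemma smooth_vf_cross: "smooth_vf U \<Longrightarrow> smooth_vf W \<Longrightarrow> smooth_vf (\<lambda>x. cross3 (U x) (W x))"
  unfolding smooth_vf_def
proof
  fix i :: 3 assume a: "\<forall>i. smooth (\<lambda>x. U x $ i)" "\<forall>i. smooth (\<lambda>x. W x $ i)"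
  show "smooth (\<lambda>x. (cross3 (U x) (W x)) $ i)"
    using exhaust_3[of i] a by (auto simp: cross_components intro!: smooth_diff' smooth_mult)
qed

lemma smooth_vf_scale: "smooth f \<Longrightarrow> smooth_vf V \<Longrightarrow> smooth_vf (\<lambda>x. f x *\<^sub>R V x)"
  unfolding smooth_vf_def by (auto intro!: smooth_mult)

lemma vf_apply_scale: assumes "f differentiable (at x)"
  shows "vf_apply (\<lambda>y. h y *\<^sub>R V y) f x = h x * vf_apply V f x"
  using linear_frechet_derivative[OF assms] by (simp add: vf_apply_def linear_scale)

lemma fdv_scale: assumes "h differentiable (at x)" "V differentiable (at x)"
  shows "frechet_derivative (\<lambda>y. h y *\<^sub>R V y) (at x) v = fd h x v *\<^sub>R V x + h x *\<^sub>R frechet_derivative V (at x) v"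
proof -
  have "((\<lambda>y. h y *\<^sub>R V y) has_derivative (\<lambda>v. h x *\<^sub>R frechet_derivative V (at x) v + fd h x v *\<^sub>R V x)) (at x)"
    by (rule has_derivative_scaleR[OF frechet_derivative_works[THEN iffD1, OF assms(1)]
           frechet_derivative_works[THEN iffD1, OF assms(2)]])
  from fun_cong[OF frechet_derivative_at[OF this], of v] show ?thesis by (simp add: add.commute)
qed

lemma lie_scale: assumes "f differentiable (at x)" "h differentiable (at x)"
   "V differentiable (at x)" "W differentiable (at x)"
  shows "lie_bracket (\<lambda>y. f y *\<^sub>R V y) (\<lambda>y. h y *\<^sub>R W y) x =
     (f x * h x) *\<^sub>R lie_bracket V W x + (f x * vf_apply V h x) *\<^sub>R W x - (h x * vf_apply W f x) *\<^sub>R V x"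
proof -
  have lV: "linear (frechet_derivative V (at x))" and lW: "linear (frechet_derivative W (at x))"
    using assms linear_frechet_derivative by auto
  have lf: "linear (fd f x)" and lh: "linear (fd h x)"
    using assms linear_frechet_derivative by auto
  show ?thesis
    unfolding lie_bracket_def fdv_scale[OF assms(2,4)] fdv_scale[OF assms(1,3)] vf_apply_def
    by (simp add: linear_scale[OF lV] linear_scale[OF lW] linear_scale[OF lf] linear_scale[OF lh]
        algebra_simps)
qed



lemma frame_identity: fixes a b c v :: "real^3"
  shows "(a \<bullet> cross3 b c) *\<^sub>R v = (v \<bullet> cross3 b c) *\<^sub>R a + (v \<bullet> cross3 c a) *\<^sub>R b + (v \<bullet> cross3 a b) *\<^sub>R c"
  by (simp add: cross3_simps forall_3)

lemma bac_cab: fixes a b :: "real^3"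
  shows "cross3 a (cross3 b a) = (a \<bullet> a) *\<^sub>R b - (a \<bullet> b) *\<^sub>R a"
  by (simp add: cross3_simps forall_3)

lemma sum123: "(\<Sum>l\<in>{1,2,3::nat}. F l) = F 1 + F 2 + F 3"
proof -
  have "(\<Sum>l\<in>{1,2,3::nat}. F l) = F 1 + (F 2 + F 3)" by simp
  then show ?thesis by (simp only: add.assoc)
qed

lemma indep3: assumes "is_frame D" "\<alpha> *\<^sub>R D 1 x + \<beta> *\<^sub>R D 2 x + \<gamma> *\<^sub>R D 3 x = 0"
  shows "\<alpha> = 0 \<and> \<beta> = 0 \<and> \<gamma> = 0"
proof -
  let ?a = "\<lambda>l::nat. if l = 1 then \<alpha> else if l = 2 then \<beta> else \<gamma>"
  have eq: "(\<Sum>l\<in>{1,2,3}. ?a l *\<^sub>R D l x) = 0" using assms(2) unfolding sum123 by simp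
  have H: "\<forall>x a. (\<Sum>l\<in>{1,2,3}. a l *\<^sub>R D l x) = 0 \<longrightarrow> (\<forall>l\<in>{1,2,3}. a l = 0)"
    using assms(1) unfolding is_frame_def by blast
  have "\<forall>l\<in>{1,2,3}. ?a l = 0"
    using mp[OF spec[OF spec[OF H, of x], of ?a] eq] .
  then show ?thesis by auto
qed

definition TT :: "(nat \<Rightarrow> pt \<Rightarrow> pt) \<Rightarrow> pt \<Rightarrow> real" where
  "TT D x = D 1 x \<bullet> cross3 (D 2 x) (D 3 x)"

lemma TT_nz: assumes F: "is_frame D" shows "TT D x \<noteq> 0"
proof
  assume T0: "TT D x = 0"
  let ?c = "cross3 (D 2 x) (D 3 x)"
  have "(?c \<bullet> ?c) *\<^sub>R D 1 x + (?c \<bullet> cross3 (D 3 x) (D 1 x)) *\<^sub>R D 2 x + (?c \<bullet> cross3 (D 1 x) (D 2 x)) *\<^sub>R D 3 x = 0"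
    using frame_identity[of "D 1 x" "D 2 x" "D 3 x" ?c] T0 by (simp add: TT_def)
  then have "?c \<bullet> ?c = 0" using indep3[OF F] by blast
  then have c0: "?c = 0" by simp
  have "cross3 (D 3 x) (D 2 x) = 0" using c0 cross_skew[of "D 3 x" "D 2 x"] by simp
  then have "0 *\<^sub>R D 1 x + (- (D 2 x \<bullet> D 3 x)) *\<^sub>R D 2 x + (D 2 x \<bullet> D 2 x) *\<^sub>R D 3 x = 0"
    using bac_cab[of "D 2 x" "D 3 x"] by simp
  then have "D 2 x \<bullet> D 2 x = 0" using indep3[OF F] by blast
  then have "D 2 x = 0" by simp
  then show False using indep3[OF F, of 0 x 1 0] by simp
qed

definition coef :: "(nat \<Rightarrow> pt \<Rightarrow> pt) \<Rightarrow> pt \<Rightarrow> pt \<Rightarrow> nat \<Rightarrow> real" where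
  "coef D x v i = (if i = 1 then v \<bullet> cross3 (D 2 x) (D 3 x)
     else if i = 2 then v \<bullet> cross3 (D 3 x) (D 1 x) else v \<bullet> cross3 (D 1 x) (D 2 x)) / TT D x"

lemma coef_repr: assumes "is_frame D" shows "v = (\<Sum>l\<in>{1,2,3}. coef D x v l *\<^sub>R D l x)"
proof -
  have T: "TT D x \<noteq> 0" by (rule TT_nz[OF assms])
  have 1: "TT D x *\<^sub>R v = (v \<bullet> cross3 (D 2 x) (D 3 x)) *\<^sub>R D 1 x + (v \<bullet> cross3 (D 3 x) (D 1 x)) *\<^sub>R D 2 x
     + (v \<bullet> cross3 (D 1 x) (D 2 x)) *\<^sub>R D 3 x"
    unfolding TT_def by (rule frame_identity)
  have 2: "TT D x *\<^sub>R (\<Sum>l\<in>{1,2,3}. coef D x v l *\<^sub>R D l x) = (v \<bullet> cross3 (D 2 x) (D 3 x)) *\<^sub>R D 1 x + (v \<bullet> cross3 (D 3 x) (D 1 x)) *\<^sub>R D 2 x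
     + (v \<bullet> cross3 (D 1 x) (D 2 x)) *\<^sub>R D 3 x"
    unfolding sum123 coef_def scaleR_add_right scaleR_scaleR using T by simp
  from trans[OF 1 2[symmetric]] T show ?thesis by simp
qed

lemma frame_coord_eq: assumes F: "is_frame D" and v: "v = (\<Sum>l\<in>{1,2,3}. a l *\<^sub>R D l x)"
  and i: "i \<in> {1,2,3}"
  shows "frame_coord D v x i = a i"
  unfolding frame_coord_def
proof (rule the1_equality)
  show "\<exists>a'. v = (\<Sum>l\<in>{1,2,3}. a' l *\<^sub>R D l x) \<and> a i = a' i" using v by blast
  show "\<exists>!c. \<exists>a'. v = (\<Sum>l\<in>{1, 2, 3}. a' l *\<^sub>R D l x) \<and> c = a' i"
  proof (rule ex1I)
    show "\<exists>a'. v = (\<Sum>l\<in>{1,2,3}. a' l *\<^sub>R D l x) \<and> a i = a' i" using v by blast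
    fix c assume "\<exists>a'. v = (\<Sum>l\<in>{1, 2, 3}. a' l *\<^sub>R D l x) \<and> c = a' i"
    then obtain a' where a': "v = (\<Sum>l\<in>{1, 2, 3}. a' l *\<^sub>R D l x)" "c = a' i" by blast
    have eq: "(\<Sum>l\<in>{1,2,3}. (a l - a' l) *\<^sub>R D l x) = 0"
      using v a'(1) unfolding sum123 by (simp add: algebra_simps)
    have H: "\<forall>x a. (\<Sum>l\<in>{1,2,3}. a l *\<^sub>R D l x) = 0 \<longrightarrow> (\<forall>l\<in>{1,2,3}. a l = 0)"
      using F unfolding is_frame_def by blast
    have "\<forall>l\<in>{1,2,3}. a l - a' l = 0"
      using spec[OF spec[OF H, of x], of "\<lambda>l. a l - a' l"] eq by simp
    then show "c = a i" using i a'(2) by auto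
  qed
qed

lemma frame_coord_coef: "is_frame D \<Longrightarrow> i \<in> {1,2,3} \<Longrightarrow> frame_coord D v x i = coef D x v i"
  using frame_coord_eq coef_repr by blast

lemma frame_smooth: "is_frame D \<Longrightarrow> l \<in> {1,2,3} \<Longrightarrow> smooth_vf (D l)"
  unfolding is_frame_def by blast

lemma smooth_TT: assumes "is_frame D" shows "smooth (TT D)"
  unfolding TT_def[abs_def] using frame_smooth[OF assms]
  by (intro smooth_inner smooth_vf_cross) auto

lemma smooth_struct: assumes F: "is_frame D" and "j \<in> {1,2,3}" "k \<in> {1,2,3}" "i \<in> {1,2,3}"
  shows "smooth (struct_fun D j k i)"
proof -
  have L: "smooth_vf (lie_bracket (D j) (D k))"
    using assms frame_smooth[OF F] by (intro smooth_vf_lie) auto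
  have S: "smooth_vf (D l)" if "l \<in> {1,2,3}" for l using frame_smooth[OF F that] .
  have e: "struct_fun D j k i = (\<lambda>x. coef D x (lie_bracket (D j) (D k) x) i)"
    using frame_coord_coef[OF F assms(4)] by (auto simp: struct_fun_def[abs_def])
  have N: "smooth (\<lambda>x. lie_bracket (D j) (D k) x \<bullet> cross3 (D a x) (D b x))"
    if "a \<in> {1,2,3}" "b \<in> {1,2,3}" for a b
    using that by (intro smooth_inner smooth_vf_cross L S)
  have T: "\<forall>x. TT D x \<noteq> 0" using TT_nz[OF F] by blast
  consider "i = 1" | "i = 2" | "i = 3" using assms(4) by auto
  then show ?thesis
  proof cases
    case 1 then show ?thesis unfolding e coef_def using smooth_div[OF N smooth_TT[OF F] T] by simp
  next
    case 2 then show ?thesis unfolding e coef_def using smooth_div[OF N smooth_TT[OF F] T] by simp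
  next
    case 3 then show ?thesis unfolding e coef_def using smooth_div[OF N smooth_TT[OF F] T] by simp
  qed
qed

lemma continuous_struct: "is_frame D \<Longrightarrow> j \<in> {1,2,3} \<Longrightarrow> k \<in> {1,2,3} \<Longrightarrow> i \<in> {1,2,3} \<Longrightarrow>
  continuous_on UNIV (struct_fun D j k i)"
  using smooth_struct smooth_cont by blast



lemma frame_scale: assumes F: "is_frame D" and fs: "\<And>l. l \<in> {1,2,3} \<Longrightarrow> smooth (f l)"
  and fnz: "\<And>l x. l \<in> {1,2,3} \<Longrightarrow> f l x \<noteq> 0"
  shows "is_frame (\<lambda>i x. f i x *\<^sub>R D i x)"
  unfolding is_frame_def
proof (intro conjI ballI allI impI)
  fix i :: nat assume "i \<in> {1,2,3}"
  then show "smooth_vf (\<lambda>x. f i x *\<^sub>R D i x)" using fs frame_smooth[OF F] by (intro smooth_vf_scale) auto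
next
  fix x a l assume eq0: "(\<Sum>l\<in>{1,2,3::nat}. a l *\<^sub>R f l x *\<^sub>R D l x) = 0" and l: "l \<in> {1,2,3::nat}"
  have H: "\<forall>x a. (\<Sum>l\<in>{1,2,3}. a l *\<^sub>R D l x) = 0 \<longrightarrow> (\<forall>l\<in>{1,2,3}. a l = 0)"
    using F unfolding is_frame_def by blast
  have eq: "(\<Sum>l\<in>{1,2,3}. (a l * f l x) *\<^sub>R D l x) = 0" using eq0 by simp
  have "\<forall>l\<in>{1,2,3}. a l * f l x = 0"
    using mp[OF spec[OF spec[OF H, of x], of "\<lambda>l. a l * f l x"]] eq by simp
  then show "a l = 0" using l fnz[OF l] by auto
qed

lemma sum_delta3: fixes V :: "nat \<Rightarrow> pt" shows "k \<in> {1,2,3::nat} \<Longrightarrow> (\<Sum>l\<in>{1,2,3}. (if l = k then \<alpha> else 0) *\<^sub>R V l) = \<alpha> *\<^sub>R V k"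
  by auto

lemma struct_scale: assumes F: "is_frame D" and fs: "\<And>l. l \<in> {1,2,3} \<Longrightarrow> smooth (f l)"
  and fnz: "\<And>l x. l \<in> {1,2,3} \<Longrightarrow> f l x \<noteq> 0"
  and j: "j \<in> {1,2,3}" and k: "k \<in> {1,2,3}" and l: "l \<in> {1,2,3}"
  shows "struct_fun (\<lambda>i x. f i x *\<^sub>R D i x) j k l x =
    (f j x * f k x * struct_fun D j k l x + (if l = k then f j x * vf_apply (D j) (f k) x else 0)
      - (if l = j then f k x * vf_apply (D k) (f j) x else 0)) / f l x"
proof -
  define b where "b l = f j x * f k x * struct_fun D j k l x + (if l = k then f j x * vf_apply (D j) (f k) x else 0)
      - (if l = j then f k x * vf_apply (D k) (f j) x else 0)" for l
  have F': "is_frame (\<lambda>i x. f i x *\<^sub>R D i x)" by (rule frame_scale[OF F fs fnz])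
  have dD: "D i differentiable (at x)" if "i \<in> {1,2,3}" for i
    using frame_smooth[OF F that] vf_diff by blast
  have df: "f i differentiable (at x)" if "i \<in> {1,2,3}" for i
    using fs[OF that] smooth_diff by blast
  have "lie_bracket (D j) (D k) x = (\<Sum>l\<in>{1,2,3}. coef D x (lie_bracket (D j) (D k) x) l *\<^sub>R D l x)"
    by (rule coef_repr[OF F])
  also have "\<dots> = (\<Sum>l\<in>{1,2,3}. struct_fun D j k l x *\<^sub>R D l x)"
    unfolding struct_fun_def by (rule sum.cong[OF refl]) (simp add: frame_coord_coef[OF F])
  finally have br: "lie_bracket (D j) (D k) x = (\<Sum>l\<in>{1,2,3}. struct_fun D j k l x *\<^sub>R D l x)" .
  have "lie_bracket (\<lambda>y. f j y *\<^sub>R D j y) (\<lambda>y. f k y *\<^sub>R D k y) x =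
     (f j x * f k x) *\<^sub>R lie_bracket (D j) (D k) x + (f j x * vf_apply (D j) (f k) x) *\<^sub>R D k x
      - (f k x * vf_apply (D k) (f j) x) *\<^sub>R D j x"
    by (rule lie_scale[OF df[OF j] df[OF k] dD[OF j] dD[OF k]])
  also have "\<dots> = (\<Sum>l\<in>{1,2,3}. (f j x * f k x * struct_fun D j k l x) *\<^sub>R D l x)
     + (\<Sum>l\<in>{1,2,3}. (if l = k then f j x * vf_apply (D j) (f k) x else 0) *\<^sub>R D l x)
     - (\<Sum>l\<in>{1,2,3}. (if l = j then f k x * vf_apply (D k) (f j) x else 0) *\<^sub>R D l x)"
    unfolding br sum_delta3[OF j] sum_delta3[OF k] by (simp add: scaleR_add_right)
  also have "\<dots> = (\<Sum>l\<in>{1,2,3}. b l *\<^sub>R D l x)"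
    unfolding b_def by (simp add: scaleR_add_left scaleR_diff_left sum.distrib sum_subtractf)
  also have "\<dots> = (\<Sum>l\<in>{1,2,3}. (b l / f l x) *\<^sub>R (f l x *\<^sub>R D l x))"
    by (rule sum.cong[OF refl]) (use fnz in simp)
  finally have "lie_bracket (\<lambda>y. f j y *\<^sub>R D j y) (\<lambda>y. f k y *\<^sub>R D k y) x =
     (\<Sum>l\<in>{1,2,3}. (b l / f l x) *\<^sub>R (f l x *\<^sub>R D l x))" (is "?L = ?R") .
  note fc = frame_coord_eq[OF F' this l]
  have "struct_fun (\<lambda>i x. f i x *\<^sub>R D i x) j k l x = b l / f l x"
    unfolding struct_fun_def by (rule fc)
  then show ?thesis by (simp add: b_def)
qed



lemma alg:
  fixes fi fj fk a b L dA dB dgi dgj dgk gi gj gk cj ck dxi dfj dfk :: real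
  assumes nz: "fi \<noteq> 0" "fj \<noteq> 0" "fk \<noteq> 0" "a \<noteq> 0" "b \<noteq> 0"
  and dfj: "dfj = fj * (dA / a + (dgi + dgk) * L + (gi + gk) * dB / b)"
  and dfk: "dfk = fk * (dA / a + (dgi + dgj) * L + (gi + gj) * dB / b)"
  and E1: "gi * gj + gj * gk + gk * gi = 0"
  and dE1: "dgi * (gj + gk) + dgj * (gi + gk) + dgk * (gi + gj) = 0"
  and E2: "0 = (dgj + dgk) + cj * (gi - gj) + ck * (gi - gk) - 2 * dxi * gi"
  shows "0 = fi * (dA * (gj + gk) + a * (dgj + dgk)) + ((fi * fj * cj + fi * dfj) / fj) * (a * gi - a * gj)
     + ((fi * fk * ck + fi * dfk) / fk) * (a * gi - a * gk)
     - 2 * (fi * (dxi + dA * (1 / a) + (dgi + dgj + dgk) * L + (gi + gj + gk) * (dB * (1 / b)))) * (a * gi)"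
proof -
  have e1: "(fi * fj * cj + fi * dfj) / fj = fi * (cj + (dA / a + (dgi + dgk) * L + (gi + gk) * dB / b))"
    using nz unfolding dfj by (simp add: field_simps)
  have e2: "(fi * fk * ck + fi * dfk) / fk = fi * (ck + (dA / a + (dgi + dgj) * L + (gi + gj) * dB / b))"
    using nz unfolding dfk by (simp add: field_simps)
  have "fi * (dA * (gj + gk) + a * (dgj + dgk)) + fi * (cj + (dA / a + (dgi + dgk) * L + (gi + gk) * dB / b)) * (a * gi - a * gj)
     + fi * (ck + (dA / a + (dgi + dgj) * L + (gi + gj) * dB / b)) * (a * gi - a * gk)
     - 2 * (fi * (dxi + dA * (1 / a) + (dgi + dgj + dgk) * L + (gi + gj + gk) * (dB * (1 / b)))) * (a * gi)
     = fi * a * ((dgj + dgk) + cj * (gi - gj) + ck * (gi - gk) - 2 * dxi * gi)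
       - fi * a * L * (dgi * (gj + gk) + dgj * (gi + gk) + dgk * (gi + gj))
       - 2 * fi * a * (dB / b) * (gi * gj + gj * gk + gk * gi)"
    using nz by (simp add: field_simps)
  then show ?thesis using e1 e2 E1 dE1 E2 by simp
qed


lemma E2_step:
  fixes A B \<xi> :: "pt \<Rightarrow> real" and g ex f :: "nat \<Rightarrow> pt \<Rightarrow> real"
  assumes F: "is_frame D"
  and idx: "i \<in> {1,2,3}" "j \<in> {1,2,3}" "k \<in> {1,2,3}" "i \<noteq> j" "i \<noteq> k"
  and sg: "smooth (g i)" "smooth (g j)" "smooth (g k)" and sxi: "smooth \<xi>"
  and sA: "smooth A" and sB: "smooth B" and Ap: "\<forall>y. A y > 0" and Bp: "\<forall>y. B y > 0"
  and fdef: "\<And>l. f l = (\<lambda>y. \<sigma> * A y * exp (ex l y * ln (B y)))"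
  and fs: "\<And>l. l \<in> {1,2,3} \<Longrightarrow> smooth (f l)"
  and fnz: "\<And>l y. l \<in> {1,2,3} \<Longrightarrow> f l y \<noteq> 0"
  and exs: "\<And>l. l \<in> {1,2,3} \<Longrightarrow> smooth (ex l)"
  and exj: "ex j = (\<lambda>y. g i y + g k y)" and exk: "ex k = (\<lambda>y. g i y + g j y)"
  and E1: "\<forall>y. g i y * g j y + g j y * g k y + g k y * g i y = 0"
  and E2: "0 = vf_apply (D i) (\<lambda>y. g j y + g k y) x + struct_fun D i j j x * (g i x - g j x)
            + struct_fun D i k k x * (g i x - g k x) - 2 * vf_apply (D i) \<xi> x * g i x"
  shows "0 = vf_apply ((\<lambda>l y. f l y *\<^sub>R D l y) i) (\<lambda>y. A y * g j y + A y * g k y) x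
    + struct_fun (\<lambda>l y. f l y *\<^sub>R D l y) i j j x * (A x * g i x - A x * g j x)
    + struct_fun (\<lambda>l y. f l y *\<^sub>R D l y) i k k x * (A x * g i x - A x * g k x)
    - 2 * vf_apply ((\<lambda>l y. f l y *\<^sub>R D l y) i) (\<lambda>y. \<xi> y + ln (A y) + (g i y + g j y + g k y) * ln (B y)) x * (A x * g i x)"
proof -
  define v where "v = D i x"
  have dg: "g l differentiable (at x)" if "l \<in> {i,j,k}" for l using sg that smooth_diff by auto
  have dA: "A differentiable (at x)" using sA smooth_diff by auto
  have dB: "B differentiable (at x)" using sB smooth_diff by auto
  have dxi: "\<xi> differentiable (at x)" using sxi smooth_diff by auto
  have dex: "ex l differentiable (at x)" if "l \<in> {1,2,3}" for l using exs[OF that] smooth_diff by auto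
  have Ax: "A x > 0" and Bx: "B x > 0" using Ap Bp by auto
  have dlnA: "(\<lambda>y. ln (A y)) differentiable (at x)" by (rule diff_ln[OF dA Ax])
  have dlnB: "(\<lambda>y. ln (B y)) differentiable (at x)" by (rule diff_ln[OF dB Bx])
  have dgsum: "(\<lambda>y. g i y + g j y + g k y) differentiable (at x)"
    using dg by (intro differentiable_add) auto
  have df: "fd (f l) x v = f l x * (fd A x v / A x + fd (ex l) x v * ln (B x) + ex l x * fd B x v / B x)"
    if l: "l \<in> {1,2,3}" for l
  proof -
    have dsA: "(\<lambda>y. \<sigma> * A y) differentiable (at x)" using dA by (intro differentiable_mult) auto
    have dprod: "(\<lambda>y. ex l y * ln (B y)) differentiable (at x)" using dex[OF l] dlnB by (intro differentiable_mult)
    have dE: "(\<lambda>y. exp (ex l y * ln (B y))) differentiable (at x)" by (rule diff_exp[OF dprod])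
    have "fd (f l) x v = fd (\<lambda>y. (\<sigma> * A y) * exp (ex l y * ln (B y))) x v" by (simp add: fdef)
    also have "\<dots> = \<sigma> * A x * fd (\<lambda>y. exp (ex l y * ln (B y))) x v + fd (\<lambda>y. \<sigma> * A y) x v * exp (ex l x * ln (B x))"
      by (rule fd_mult[OF dsA dE])
    also have "fd (\<lambda>y. \<sigma> * A y) x v = \<sigma> * fd A x v"
      using fd_mult[OF differentiable_const dA, of \<sigma> v] by simp
    also have "fd (\<lambda>y. exp (ex l y * ln (B y))) x v = exp (ex l x * ln (B x)) * (ex l x * (fd B x v * (1 / B x)) + fd (ex l) x v * ln (B x))"
      unfolding fd_exp[OF dprod] fd_mult[OF dex[OF l] dlnB] fd_ln[OF dB Bx] ..
    finally show ?thesis using Ax Bx by (simp add: fdef field_simps)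
  qed
  have vfs: "vf_apply ((\<lambda>l y. f l y *\<^sub>R D l y) i) h x = f i x * fd h x v" if "h differentiable (at x)" for h
    using vf_apply_scale[OF that, of "f i" "D i"] by (simp add: vf_apply_def v_def)
  have d1: "fd (\<lambda>y. A y * g j y + A y * g k y) x v = fd A x v * (g j x + g k x) + A x * (fd (g j) x v + fd (g k) x v)"
    using dA dg by (simp add: fd_add fd_mult differentiable_mult algebra_simps)
  have d1': "(\<lambda>y. A y * g j y + A y * g k y) differentiable (at x)"
    using dA dg by (intro differentiable_add differentiable_mult) auto
  have d2: "fd (\<lambda>y. \<xi> y + ln (A y) + (g i y + g j y + g k y) * ln (B y)) x v
     = fd \<xi> x v + fd A x v * (1 / A x) + (fd (g i) x v + fd (g j) x v + fd (g k) x v) * ln (B x)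
       + (g i x + g j x + g k x) * (fd B x v * (1 / B x))"
    using dxi dlnA dlnB dgsum dg
    by (simp add: fd_add fd_mult fd_ln[OF dA Ax] fd_ln[OF dB Bx] differentiable_mult differentiable_add algebra_simps add_divide_distrib)
  have d2': "(\<lambda>y. \<xi> y + ln (A y) + (g i y + g j y + g k y) * ln (B y)) differentiable (at x)"
    using dxi dlnA dlnB dgsum dg by (intro differentiable_add differentiable_mult) auto
  have s1: "struct_fun (\<lambda>l y. f l y *\<^sub>R D l y) i j j x = (f i x * f j x * struct_fun D i j j x + f i x * fd (f j) x v) / f j x"
    using struct_scale[OF F fs fnz idx(1) idx(2) idx(2), where x=x] idx by (simp add: vf_apply_def v_def)
  have s2: "struct_fun (\<lambda>l y. f l y *\<^sub>R D l y) i k k x = (f i x * f k x * struct_fun D i k k x + f i x * fd (f k) x v) / f k x"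
    using struct_scale[OF F fs fnz idx(1) idx(3) idx(3), where x=x] idx by (simp add: vf_apply_def v_def)
  have e1x: "g i x * g j x + g j x * g k x + g k x * g i x = 0" using E1 by auto
  have "(\<lambda>y. g i y * g j y + g j y * g k y + g k y * g i y) = (\<lambda>y. 0)" using E1 by auto
  then have "fd (\<lambda>y. g i y * g j y + g j y * g k y + g k y * g i y) x v = 0" by simp
  then have de1: "fd (g i) x v * (g j x + g k x) + fd (g j) x v * (g i x + g k x) + fd (g k) x v * (g i x + g j x) = 0"
    using dg by (simp add: fd_add fd_mult differentiable_mult differentiable_add algebra_simps)
  have E2': "0 = (fd (g j) x v + fd (g k) x v) + struct_fun D i j j x * (g i x - g j x)
            + struct_fun D i k k x * (g i x - g k x) - 2 * fd \<xi> x v * g i x"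
    using E2 dg by (simp add: vf_apply_def v_def fd_add)
  have dfj: "fd (f j) x v = f j x * (fd A x v / A x + (fd (g i) x v + fd (g k) x v) * ln (B x) + (g i x + g k x) * fd B x v / B x)"
    using df[OF idx(2)] dg by (simp add: exj fd_add)
  have dfk: "fd (f k) x v = f k x * (fd A x v / A x + (fd (g i) x v + fd (g j) x v) * ln (B x) + (g i x + g j x) * fd B x v / B x)"
    using df[OF idx(3)] dg by (simp add: exk fd_add)
  show ?thesis
    unfolding vfs[OF d1'] vfs[OF d2'] d1 d2 s1 s2
    by (rule alg[OF fnz[OF idx(1)] fnz[OF idx(2)] fnz[OF idx(3)] _ _ dfj dfk e1x de1 E2'])
       (use Ax Bx in auto)
qed



lemma ex_sums: fixes g :: "nat \<Rightarrow> pt \<Rightarrow> real" shows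
  "(\<Sum>l\<in>{1,2,3} - {1::nat}. g l y) = g 2 y + g 3 y"
  "(\<Sum>l\<in>{1,2,3} - {2::nat}. g l y) = g 1 y + g 3 y"
  "(\<Sum>l\<in>{1,2,3} - {3::nat}. g l y) = g 1 y + g 2 y"
proof -
  have "{1,2,3} - {1::nat} = {2,3}" "{1,2,3} - {2::nat} = {1,3}" "{1,2,3} - {3::nat} = {1,2}" by auto
  then show "(\<Sum>l\<in>{1,2,3} - {1::nat}. g l y) = g 2 y + g 3 y"
    "(\<Sum>l\<in>{1,2,3} - {2::nat}. g l y) = g 1 y + g 3 y"
    "(\<Sum>l\<in>{1,2,3} - {3::nat}. g l y) = g 1 y + g 2 y" by simp_all
qed

lemma setup_f:
  fixes g :: "nat \<Rightarrow> pt \<Rightarrow> real" and A B :: "pt \<Rightarrow> real"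
  assumes sg: "\<forall>i\<in>{1,2,3}. smooth (g i)" and sA: "smooth A" and sB: "smooth B"
    and Ap: "\<forall>y. A y > 0" and Bp: "\<forall>y. B y > 0" and \<sigma>: "\<sigma> \<noteq> 0"
  and ex_def: "ex = (\<lambda>l y. (\<Sum>l'\<in>{1,2,3} - {l}. g l' y))"
  and f_def: "f = (\<lambda>l y. \<sigma> * A y * B y powr ex l y)"
  shows "\<And>l. f l = (\<lambda>y. \<sigma> * A y * exp (ex l y * ln (B y)))"
    and "\<And>l. l \<in> {1,2,3} \<Longrightarrow> smooth (ex l)"
    and "\<And>l. l \<in> {1,2,3} \<Longrightarrow> smooth (f l)"
    and "\<And>l y. f l y \<noteq> 0"
    and "ex 1 = (\<lambda>y. g 2 y + g 3 y)" "ex 2 = (\<lambda>y. g 1 y + g 3 y)" "ex 3 = (\<lambda>y. g 1 y + g 2 y)"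
proof -
  show fdef: "f l = (\<lambda>y. \<sigma> * A y * exp (ex l y * ln (B y)))" for l
    using Bp by (auto simp: f_def powr_def less_imp_neq[symmetric] mult.commute)
  show e1: "ex 1 = (\<lambda>y. g 2 y + g 3 y)" and e2: "ex 2 = (\<lambda>y. g 1 y + g 3 y)"
    and e3: "ex 3 = (\<lambda>y. g 1 y + g 2 y)" unfolding ex_def by (simp_all only: ex_sums)
  show es: "smooth (ex l)" if "l \<in> {1,2,3}" for l
    using that sg e1 e2 e3 by (auto intro!: smooth_add)
  show "smooth (f l)" if "l \<in> {1,2,3}" for l
    unfolding fdef using es[OF that] sA sB Bp
    by (intro smooth_mult smooth_const smooth_exp smooth_ln) auto
  show "f l y \<noteq> 0" for l y
    unfolding fdef using \<sigma> Ap by (simp add: less_imp_neq[symmetric])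
qed

lemma MCpre_transform:
  fixes g :: "nat \<Rightarrow> pt \<Rightarrow> real" and A B :: "pt \<Rightarrow> real"
  assumes M: "MC_pre g D \<xi>" and sA: "smooth A" and sB: "smooth B"
    and Ap: "\<forall>y. A y > 0" and Bp: "\<forall>y. B y > 0" and \<sigma>: "\<sigma> \<noteq> 0"
  shows "MC_pre (\<lambda>i x. A x * g i x)
             (\<lambda>i x. (\<sigma> * A x * B x powr (\<Sum>l\<in>{1,2,3} - {i}. g l x)) *\<^sub>R D i x)
             (\<lambda>x. \<xi> x + ln (A x) + (g 1 x + g 2 x + g 3 x) * ln (B x))"
proof -
  have sg: "\<forall>i\<in>{1,2,3}. smooth (g i)" and sxi: "smooth \<xi>" and F: "is_frame D"
    and E1: "\<forall>x. 0 = g 2 x * g 3 x + g 3 x * g 1 x + g 1 x * g 2 x"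
    and E2: "\<forall>i j k x. cyclic i j k \<longrightarrow>
        0 = vf_apply (D i) (\<lambda>y. g j y + g k y) x
            + struct_fun D i j j x * (g i x - g j x)
            + struct_fun D i k k x * (g i x - g k x)
            - 2 * vf_apply (D i) \<xi> x * g i x"
    using M unfolding MC_pre_def by auto
  define ex where "ex = (\<lambda>l y. (\<Sum>l'\<in>{1,2,3} - {l}. g l' y))"
  define f where "f = (\<lambda>l y. \<sigma> * A y * B y powr ex l y)"
  note S = setup_f[OF sg sA sB Ap Bp \<sigma> ex_def f_def]
  have fdef: "\<And>l. f l = (\<lambda>y. \<sigma> * A y * exp (ex l y * ln (B y)))" by (rule S(1))
  have exs: "\<And>l. l \<in> {1,2,3} \<Longrightarrow> smooth (ex l)" by (rule S(2))
  have fs: "\<And>l. l \<in> {1,2,3} \<Longrightarrow> smooth (f l)" by (rule S(3))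
  have fnz: "\<And>l y. l \<in> {1,2,3} \<Longrightarrow> f l y \<noteq> 0" using S(4) by blast
  have ex1: "ex 1 = (\<lambda>y. g 2 y + g 3 y)" and ex2: "ex 2 = (\<lambda>y. g 1 y + g 3 y)"
    and ex3: "ex 3 = (\<lambda>y. g 1 y + g 2 y)" by (rule S(5), rule S(6), rule S(7))
  have sg': "smooth (g l)" if "l \<in> {1,2,3}" for l using sg that by blast
  have "MC_pre (\<lambda>i x. A x * g i x) (\<lambda>i x. f i x *\<^sub>R D i x)
             (\<lambda>x. \<xi> x + ln (A x) + (g 1 x + g 2 x + g 3 x) * ln (B x))"
    unfolding MC_pre_def
  proof (intro conjI ballI allI impI)
    show "smooth (\<lambda>x. A x * g i x)" if "i \<in> {1,2,3}" for i
      using sA sg' that by (intro smooth_mult)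
    show "smooth (\<lambda>x. \<xi> x + ln (A x) + (g 1 x + g 2 x + g 3 x) * ln (B x))"
      using sxi sA sB Ap Bp sg' by (intro smooth_add smooth_mult smooth_ln) auto
    show "is_frame (\<lambda>i x. f i x *\<^sub>R D i x)" by (rule frame_scale[OF F fs fnz])
    show "0 = A x * g 2 x * (A x * g 3 x) + A x * g 3 x * (A x * g 1 x) + A x * g 1 x * (A x * g 2 x)" for x
    proof -
      have "A x * g 2 x * (A x * g 3 x) + A x * g 3 x * (A x * g 1 x) + A x * g 1 x * (A x * g 2 x)
        = A x * A x * (g 2 x * g 3 x + g 3 x * g 1 x + g 1 x * g 2 x)" by (simp add: algebra_simps)
      then show ?thesis using E1 by simp
    qed
    fix i j k x assume cyc: "cyclic i j k"
    then have c3: "(i = 1 \<and> j = 2 \<and> k = 3) \<or> (i = 2 \<and> j = 3 \<and> k = 1) \<or> (i = 3 \<and> j = 1 \<and> k = 2)"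
      by (auto simp: cyclic_def)
    then have idx: "i \<in> {1,2,3}" "j \<in> {1,2,3}" "k \<in> {1,2,3}" "i \<noteq> j" "i \<noteq> k" by auto
    have exj: "ex j = (\<lambda>y. g i y + g k y)" and exk: "ex k = (\<lambda>y. g i y + g j y)"
      using c3 ex1 ex2 ex3 by (auto simp: add.commute)
    have E1': "\<forall>y. g i y * g j y + g j y * g k y + g k y * g i y = 0"
      using c3 E1 by (auto simp: algebra_simps)
    have sumeq: "(\<lambda>x. \<xi> x + ln (A x) + (g 1 x + g 2 x + g 3 x) * ln (B x))
       = (\<lambda>x. \<xi> x + ln (A x) + (g i x + g j x + g k x) * ln (B x))"
      using c3 by (auto simp: add_ac)
    show "0 = vf_apply (\<lambda>y. f i y *\<^sub>R D i y) (\<lambda>y. A y * g j y + A y * g k y) x +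
           struct_fun (\<lambda>i x. f i x *\<^sub>R D i x) i j j x * (A x * g i x - A x * g j x) +
           struct_fun (\<lambda>i x. f i x *\<^sub>R D i x) i k k x * (A x * g i x - A x * g k x) -
           2 * vf_apply (\<lambda>y. f i y *\<^sub>R D i y) (\<lambda>x. \<xi> x + ln (A x) + (g 1 x + g 2 x + g 3 x) * ln (B x)) x * (A x * g i x)"
      unfolding sumeq
      by (rule E2_step[OF F idx sg'[OF idx(1)] sg'[OF idx(2)] sg'[OF idx(3)] sxi sA sB Ap Bp fdef fs fnz exs exj exk E1'
            E2[rule_format, OF cyc]])
  qed
  then show ?thesis unfolding f_def ex_def .
qed



lemma struct231:
  fixes g :: "nat \<Rightarrow> pt \<Rightarrow> real" and A B :: "pt \<Rightarrow> real"
  assumes M: "MC_pre g D \<xi>" and sA: "smooth A" and sB: "smooth B"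
    and Ap: "\<forall>y. A y > 0" and Bp: "\<forall>y. B y > 0" and \<sigma>: "\<sigma> \<noteq> 0"
  shows "struct_fun (\<lambda>i x. (\<sigma> * A x * B x powr (\<Sum>l\<in>{1,2,3} - {i}. g l x)) *\<^sub>R D i x) 2 3 1 x
       = \<sigma> * A x * B x powr (2 * g 1 x) * struct_fun D 2 3 1 x"
proof -
  have sg: "\<forall>i\<in>{1,2,3}. smooth (g i)" and F: "is_frame D"
    using M unfolding MC_pre_def by auto
  define ex where "ex = (\<lambda>l y. (\<Sum>l'\<in>{1,2,3} - {l}. g l' y))"
  define f where "f = (\<lambda>l y. \<sigma> * A y * B y powr ex l y)"
  note S = setup_f[OF sg sA sB Ap Bp \<sigma> ex_def f_def]
  have fdef: "\<And>l. f l = (\<lambda>y. \<sigma> * A y * exp (ex l y * ln (B y)))" by (rule S(1))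
  have fs: "\<And>l. l \<in> {1,2,3} \<Longrightarrow> smooth (f l)" by (rule S(3))
  have fnz: "\<And>l y. l \<in> {1,2,3} \<Longrightarrow> f l y \<noteq> 0" using S(4) by blast
  have ex1: "ex 1 = (\<lambda>y. g 2 y + g 3 y)" and ex2: "ex 2 = (\<lambda>y. g 1 y + g 3 y)"
    and ex3: "ex 3 = (\<lambda>y. g 1 y + g 2 y)" by (rule S(5), rule S(6), rule S(7))
  have "struct_fun (\<lambda>i x. f i x *\<^sub>R D i x) 2 3 1 x = f 2 x * f 3 x * struct_fun D 2 3 1 x / f 1 x"
    using struct_scale[OF F fs fnz, where j=2 and k=3 and l=1 and x=x] by simp
  also have "\<dots> = \<sigma> * A x * exp (2 * g 1 x * ln (B x)) * struct_fun D 2 3 1 x"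
  proof -
    let ?L = "ln (B x)"
    have "exp ((g 1 x + g 3 x) * ?L) * exp ((g 1 x + g 2 x) * ?L) = exp (2 * g 1 x * ?L) * exp ((g 2 x + g 3 x) * ?L)"
      unfolding mult_exp_exp by (simp add: algebra_simps)
    moreover have "A x \<noteq> 0" using Ap by (simp add: less_imp_neq[symmetric])
    ultimately show ?thesis using \<sigma> unfolding fdef ex1 ex2 ex3
      by (simp add: field_simps)
  qed
  also have "exp (2 * g 1 x * ln (B x)) = B x powr (2 * g 1 x)"
    using Bp by (simp add: powr_def less_imp_neq[symmetric] mult.commute)
  finally show ?thesis unfolding f_def ex_def .
qed



theorem lemma6p8:
  fixes g :: "nat \<Rightarrow> pt \<Rightarrow> real" and D :: "nat \<Rightarrow> pt \<Rightarrow> pt" and \<xi> :: "pt \<Rightarrow> real"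
  assumes "MC_pre g D \<xi>"
    and "\<forall>x. g 1 x > 0" and "\<forall>x. g 2 x < 0" and "\<forall>x. g 3 x < 0"
    and "\<forall>x. struct_fun D 2 3 1 x \<noteq> 0"
  shows "\<exists>!(A, B, \<sigma>). smooth A \<and> smooth B \<and> (\<forall>x. A x > 0) \<and> (\<forall>x. B x > 0) \<and>
           \<sigma> \<in> {-1, 1::real} \<and>
           MC_normal (\<lambda>i x. A x * g i x)
             (\<lambda>i x. (\<sigma> * A x * B x powr (\<Sum>l\<in>{1,2,3} - {i}. g l x)) *\<^sub>R D i x)
             (\<lambda>x. \<xi> x + ln (A x) + (g 1 x + g 2 x + g 3 x) * ln (B x))"
proof -
  note M = assms(1)
  have sg: "\<forall>i\<in>{1,2,3}. smooth (g i)" and F: "is_frame D"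
    and E1: "\<forall>x. 0 = g 2 x * g 3 x + g 3 x * g 1 x + g 1 x * g 2 x"
    using M unfolding MC_pre_def by auto
  have g1p: "\<And>x. g 1 x > 0" and g2n: "\<And>x. g 2 x < 0" and g3n: "\<And>x. g 3 x < 0"
    using assms(2-4) by auto
  define c where "c = struct_fun D 2 3 1"
  have cnz: "\<And>x. c x \<noteq> 0" using assms(5) by (simp add: c_def)
  have cc: "continuous_on UNIV c" unfolding c_def by (rule continuous_struct[OF F]) auto
  have sc: "(\<forall>x. c x > 0) \<or> (\<forall>x. c x < 0)"
  proof (rule ccontr)
    assume "\<not> ?thesis"
    then obtain p q where "\<not> c p > 0" "\<not> c q < 0" by auto
    then have pq: "c p < 0" "c q > 0" using cnz[of p] cnz[of q] by auto
    have "connected (c ` UNIV)" by (rule connected_continuous_image[OF cc connected_UNIV])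
    then have "0 \<in> c ` UNIV"
      unfolding connected_iff_interval using pq by (meson UNIV_I image_eqI less_imp_le)
    then show False using cnz by auto
  qed
  define \<sigma> where "\<sigma> = (if c 0 > 0 then -1 else (1::real))"
  have \<sigma>c: "\<sigma> * c x < 0" for x
    using sc
  proof
    assume h: "\<forall>x. c x > 0"
    then show ?thesis unfolding \<sigma>_def by simp
  next
    assume h: "\<forall>x. c x < 0"
    then have "\<not> c 0 > 0" by (metis less_asym)
    then show ?thesis unfolding \<sigma>_def using h by simp
  qed
  have \<sigma>01: "\<sigma> \<in> {-1, 1}" and \<sigma>nz: "\<sigma> \<noteq> 0" unfolding \<sigma>_def by auto
  define m where "m = (\<lambda>x. - (\<sigma> * c x))"
  have mp: "\<forall>x. m x > 0" unfolding m_def using \<sigma>c by (simp add: neg_0_less_iff_less)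
  have sm: "smooth m" unfolding m_def c_def
    by (intro smooth_minus smooth_mult smooth_const smooth_struct[OF F]) auto
  define A where "A = (\<lambda>x. 1 / (2 * g 1 x))"
  have Ap: "\<forall>x. A x > 0" unfolding A_def using g1p by simp
  have sg1: "smooth (g 1)" using sg by auto
  have sA: "smooth A" unfolding A_def using g1p sg1
    by (intro smooth_div smooth_const smooth_mult) (auto simp: less_imp_neq[symmetric])
  define B where "B = (\<lambda>x. exp ((ln 2 - ln (A x) - ln (m x)) / (2 * g 1 x)))"
  have Bp: "\<forall>x. B x > 0" unfolding B_def by simp
  have sB: "smooth B" unfolding B_def using g1p sg1 sA sm Ap mp
    by (intro smooth_exp smooth_div smooth_diff' smooth_ln smooth_const smooth_mult)
       (auto simp: less_imp_neq[symmetric])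
  have key: "\<sigma> * A x * B x powr (2 * g 1 x) * c x = -2" for x
  proof -
    have "B x powr (2 * g 1 x) = exp (2 * g 1 x * ((ln 2 - ln (A x) - ln (m x)) / (2 * g 1 x)))"
      using Bp by (simp add: powr_def B_def)
    also have "\<dots> = exp (ln 2 - ln (A x) - ln (m x))" using g1p[of x] by simp
    also have "\<dots> = 2 / (A x * m x)" using Ap mp by (simp add: exp_diff)
    finally have "B x powr (2 * g 1 x) = 2 / (A x * m x)" .
    then show ?thesis using Ap mp cnz[of x] \<sigma>nz unfolding m_def
      by (simp add: field_simps less_imp_neq[symmetric])
  qed
  have S231: "struct_fun (\<lambda>i x. (s * A' x * B' x powr (\<Sum>l\<in>{1,2,3} - {i}. g l x)) *\<^sub>R D i x) 2 3 1 x
       = s * A' x * B' x powr (2 * g 1 x) * c x"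
    if "smooth A'" "smooth B'" "\<forall>y. A' y > 0" "\<forall>y. B' y > 0" "s \<noteq> 0" for A' B' s x
    unfolding c_def by (rule struct231[OF M that])
  have g12: "g 1 x + g 2 x < 0" for x
  proof (rule ccontr)
    assume "\<not> g 1 x + g 2 x < 0"
    then have "g 3 x * (g 1 x + g 2 x) \<le> 0" using g3n[of x] by (simp add: mult_nonpos_nonneg)
    moreover have "g 1 x * g 2 x < 0" using g1p[of x] g2n[of x] by (simp add: mult_pos_neg)
    moreover have "g 3 x * (g 1 x + g 2 x) = - (g 1 x * g 2 x)" using E1[rule_format, of x] by algebra
    ultimately show False by linarith
  qed
  define P where "P = (\<lambda>A B \<sigma>. smooth A \<and> smooth B \<and> (\<forall>x. A x > 0) \<and> (\<forall>x. B x > 0) \<and>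
           \<sigma> \<in> {-1, 1::real} \<and>
           MC_normal (\<lambda>i x. A x * g i x)
             (\<lambda>i x. (\<sigma> * A x * B x powr (\<Sum>l\<in>{1,2,3} - {i}. g l x)) *\<^sub>R D i x)
             (\<lambda>x. \<xi> x + ln (A x) + (g 1 x + g 2 x + g 3 x) * ln (B x)))"
  have exist: "P A B \<sigma>"
    unfolding P_def MC_normal_def
  proof (intro conjI)
    show "smooth A" "smooth B" "\<forall>x. A x > 0" "\<forall>x. B x > 0" "\<sigma> \<in> {-1, 1}"
      using sA sB Ap Bp \<sigma>01 by auto
    show "MC_pre (\<lambda>i x. A x * g i x)
             (\<lambda>i x. (\<sigma> * A x * B x powr (\<Sum>l\<in>{1,2,3} - {i}. g l x)) *\<^sub>R D i x)
             (\<lambda>x. \<xi> x + ln (A x) + (g 1 x + g 2 x + g 3 x) * ln (B x))"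
      by (rule MCpre_transform[OF M sA sB Ap Bp \<sigma>nz])
    show "\<forall>x. struct_fun (\<lambda>i x. (\<sigma> * A x * B x powr (\<Sum>l\<in>{1,2,3} - {i}. g l x)) *\<^sub>R D i x) 2 3 1 x = -2"
      using S231[OF sA sB Ap Bp \<sigma>nz] key by simp
    define u where "u = (\<lambda>x. -1 - 2 * A x * g 2 x)"
    have su: "smooth u" unfolding u_def using sA sg
      by (intro smooth_diff' smooth_const smooth_mult) auto
    have up: "u x > 0" for x
      using g12[of x] g1p[of x] unfolding u_def A_def by (simp add: field_simps)
    have eqs: "A x * g 1 x = 1/2 \<and> A x * g 2 x = (-1 - u x) / 2 \<and> A x * g 3 x = (-1 - 1 / u x) / 2" for x
    proof -
      have n1: "g 1 x \<noteq> 0" and n12: "g 1 x + g 2 x \<noteq> 0" using g1p[of x] g12[of x] by auto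
      have "g 3 x * (g 1 x + g 2 x) = - (g 1 x * g 2 x)" using E1[rule_format, of x] by algebra
      then have g3: "g 3 x = - (g 1 x * g 2 x) / (g 1 x + g 2 x)"
        using n12 by (simp add: field_simps)
      show ?thesis using n1 n12 unfolding u_def A_def g3 by (simp add: field_simps)
    qed
    show "\<exists>u. smooth u \<and> (\<forall>x. 0 < u x) \<and>
        (\<forall>x. A x * g 1 x = 1 / 2 \<and> A x * g 2 x = (- 1 - u x) / 2 \<and> A x * g 3 x = (- 1 - 1 / u x) / 2)"
      using su up eqs by blast
  qed
  have uniq: "(A', B', s) = (A, B, \<sigma>)" if "P A' B' s" for A' B' s
  proof -
    from that have sA': "smooth A'" and sB': "smooth B'" and Ap': "\<forall>x. A' x > 0" and Bp': "\<forall>x. B' x > 0"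
      and s01: "s \<in> {-1, 1}"
      and N: "MC_normal (\<lambda>i x. A' x * g i x)
             (\<lambda>i x. (s * A' x * B' x powr (\<Sum>l\<in>{1,2,3} - {i}. g l x)) *\<^sub>R D i x)
             (\<lambda>x. \<xi> x + ln (A' x) + (g 1 x + g 2 x + g 3 x) * ln (B' x))"
      unfolding P_def by auto
    have snz: "s \<noteq> 0" using s01 by auto
    from N have h1: "\<forall>x. A' x * g 1 x = 1/2" unfolding MC_normal_def by auto
    from N have h2: "\<forall>x. struct_fun (\<lambda>i x. (s * A' x * B' x powr (\<Sum>l\<in>{1,2,3} - {i}. g l x)) *\<^sub>R D i x) 2 3 1 x = -2"
      unfolding MC_normal_def by auto
    have AA: "A' = A"
    proof
      fix x show "A' x = A x" using h1 g1p[of x] unfolding A_def by (simp add: field_simps)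
    qed
    have k': "s * A x * B' x powr (2 * g 1 x) * c x = -2" for x
      using h2 S231[OF sA' sB' Ap' Bp' snz, of x] AA by simp
    have ss: "s = \<sigma>"
    proof (rule ccontr)
      assume ne: "s \<noteq> \<sigma>"
      then have "s = - \<sigma>" using s01 \<sigma>01 by auto
      moreover have "A 0 * B' 0 powr (2 * g 1 0) > 0"
      proof -
        have "A 0 > 0" "B' 0 > 0" using Ap Bp' by auto
        then show ?thesis by (intro mult_pos_pos) auto
      qed
      ultimately have "- (\<sigma> * c 0) * (A 0 * B' 0 powr (2 * g 1 0)) = -2" using k'[of 0] by (simp add: algebra_simps)
      moreover have "- (\<sigma> * c 0) * (A 0 * B' 0 powr (2 * g 1 0)) > 0"
        using \<sigma>c[of 0] \<open>A 0 * B' 0 powr (2 * g 1 0) > 0\<close>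
        by (simp add: mult_neg_pos)
      ultimately show False by simp
    qed
    have BB: "B' = B"
    proof
      fix x
      have nz: "\<sigma> * A x * c x \<noteq> 0" using \<sigma>nz Ap cnz[of x] by (simp add: less_imp_neq[symmetric])
      have "(\<sigma> * A x * c x) * B' x powr (2 * g 1 x) = (\<sigma> * A x * c x) * B x powr (2 * g 1 x)"
        using k'[of x] key[of x] ss by (simp add: algebra_simps)
      then have "B' x powr (2 * g 1 x) = B x powr (2 * g 1 x)" using nz by simp
      then have "ln (B' x powr (2 * g 1 x)) = ln (B x powr (2 * g 1 x))" by simp
      then have "2 * g 1 x * ln (B' x) = 2 * g 1 x * ln (B x)" using Bp Bp' by (simp add: ln_powr)
      then have "ln (B' x) = ln (B x)" using g1p[of x] by simp
      then show "B' x = B x" using Bp Bp' by simp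
    qed
    show ?thesis using AA BB ss by simp
  qed
  show ?thesis
  proof (rule ex1I[where a="(A, B, \<sigma>)"])
    show "case (A, B, \<sigma>) of (A, B, \<sigma>) \<Rightarrow> smooth A \<and> smooth B \<and> (\<forall>x. A x > 0) \<and> (\<forall>x. B x > 0) \<and>
           \<sigma> \<in> {-1, 1::real} \<and>
           MC_normal (\<lambda>i x. A x * g i x)
             (\<lambda>i x. (\<sigma> * A x * B x powr (\<Sum>l\<in>{1,2,3} - {i}. g l x)) *\<^sub>R D i x)
             (\<lambda>x. \<xi> x + ln (A x) + (g 1 x + g 2 x + g 3 x) * ln (B x))"
      using exist unfolding P_def by simp
    fix p assume hp: "case p of (A, B, \<sigma>) \<Rightarrow> smooth A \<and> smooth B \<and> (\<forall>x. A x > 0) \<and> (\<forall>x. B x > 0) \<and>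
           \<sigma> \<in> {-1, 1::real} \<and>
           MC_normal (\<lambda>i x. A x * g i x)
             (\<lambda>i x. (\<sigma> * A x * B x powr (\<Sum>l\<in>{1,2,3} - {i}. g l x)) *\<^sub>R D i x)
             (\<lambda>x. \<xi> x + ln (A x) + (g 1 x + g 2 x + g 3 x) * ln (B x))"
    obtain A' B' s where p: "p = (A', B', s)" by (cases p) auto
    have "P A' B' s" using hp unfolding p P_def by simp
    then show "p = (A, B, \<sigma>)" using uniq p by simp
  qed
qed


end
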